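(* Let $p$ be an odd prime, $\tau\in\mathbb{Z}$, and let $m=p^\alpha a$, $l=p^\beta b$ with positive integers $a,b$ such that $p\nmid a$, $p\nmid b$, and integers $\alpha\ge1$, $\beta\ge0$. Then $$p^{2\alpha}\ \Big|\ \binom{m}{l}\binom{m\tau+l-1}{m-1}-\binom{m/p}{l/p}\binom{\frac{m\tau+l}{p}-1}{\frac{m}{p}-1},$$ where, when $\beta=0$, the second term is defined to be zero.
   Context: For integers $b\geq 0$ and $a\in\mathbb{Z}$ the binomial coefficient is defined by: $\binom{a}{b}=1$ if $b=0$; $\binom{a}{b}$ is the usual binomial coefficient if $b\geq 1$ and $a\geq 0$; and $\binom{a}{b}=(-1)^b\binom{-a+b-1}{b}$ if $b\geq1$ and $a<0$. *)

theory Defs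
  imports Main "HOL-Computational_Algebra.Primes"
begin

definition ibinom :: "int \<Rightarrow> nat \<Rightarrow> int" where
  "ibinom a b = (if b = 0 then 1
                 else if a \<ge> 0 then int (nat a choose b)
                 else (-1) ^ b * int (nat (- a + int b - 1) choose b))"

end

theory Submission
  imports Defs "HOL-Computational_Algebra.Polynomial" "HOL-Computational_Algebra.Primes"
begin


lemma poly_diff_dvd: "(s::int) dvd poly H (x + s) - poly H x"
proof (induction H)
  case 0 then show ?case by simp
next
  case (pCons a H)
  then obtain k where k: "poly H (x + s) - poly H x = s * k" by blast
  have "poly (pCons a H) (x + s) - poly (pCons a H) x = s * (x * k + poly H (x+s))"
    using k by (simp add: algebra_simps)
  then show ?case by simp
qed

lemma poly_taylor1: "(t::int)^2 dvd poly H (y+t) - poly H y - t * poly (pderiv H) y"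
proof (induction H)
  case 0 then show ?case by simp
next
  case (pCons a H)
  then obtain k where k: "poly H (y+t) - poly H y - t * poly (pderiv H) y = t^2 * k" by blast
  obtain k2 where k2: "poly H (y + t) - poly H y = t * k2" using poly_diff_dvd[of t H y] by blast
  have "poly (pCons a H) (y+t) - poly (pCons a H) y - t * poly (pderiv (pCons a H)) y
      = y * (poly H (y+t) - poly H y - t * poly (pderiv H) y) + t * (poly H (y + t) - poly H y)"
    by (simp add: pderiv_pCons algebra_simps)
  also have "\<dots> = y * (t^2 * k) + t * (t * k2)" by (subst k, subst k2, rule refl)
  also have "\<dots> = t^2 * (y * k + k2)" by (simp add: algebra_simps power2_eq_square)
  finally show ?case by simp
qed

lemma poly_second_diff: "(s::int) * t dvd poly H (x+s+t) - poly H (x+t) - poly H (x+s) + poly H x"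
proof (induction H)
  case 0 then show ?case by simp
next
  case (pCons a H)
  then obtain k where k: "poly H (x+s+t) - poly H (x+t) - poly H (x+s) + poly H x = s * t * k" by blast
  obtain k1 where k1: "poly H (x + s + t) - poly H (x+s) = t * k1" using poly_diff_dvd[of t H "x+s"] by (auto simp: add.assoc)
  obtain k2 where k2: "poly H (x + s) - poly H x = s * k2" using poly_diff_dvd[of s H x] by blast
  have "poly (pCons a H) (x+s+t) - poly (pCons a H) (x+t) - poly (pCons a H) (x+s) + poly (pCons a H) x
     = x * (poly H (x+s+t) - poly H (x+t) - poly H (x+s) + poly H x)
       + s * (poly H (x + s + t) - poly H (x+s))
       + t * (poly H (x+s+t) - poly H (x+t) - poly H (x+s) + poly H x)
       + t * (poly H (x + s) - poly H x)"
    by (simp add: algebra_simps)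
  also have "\<dots> = x * (s * t * k) + s * (t * k1) + t * (s * t * k) + t * (s * k2)" by (simp only: k k1 k2)
  also have "\<dots> = s * t * (x * k + k1 + t * k + k2)" by (simp add: algebra_simps)
  finally show ?case by simp
qed

lemma poly_T2: "(s::int) * t^2 dvd poly H (x+s+t) - poly H (x+t) - poly H (x+s) + poly H x
   - t * (poly (pderiv H) (x+s) - poly (pderiv H) x)"
proof (induction H)
  case 0 then show ?case by simp
next
  case (pCons a H)
  then obtain k where k: "poly H (x+s+t) - poly H (x+t) - poly H (x+s) + poly H x
   - t * (poly (pderiv H) (x+s) - poly (pderiv H) x) = s * t^2 * k" by blast
  obtain k1 where k1: "poly H (x + s + t) - poly H (x+s) - t * poly (pderiv H) (x+s) = t^2 * k1"
    using poly_taylor1[of t H "x+s"] by (auto simp: add.assoc)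
  obtain k2 where k2: "poly H (x+s+t) - poly H (x+t) - poly H (x+s) + poly H x = s * t * k2"
    using poly_second_diff[of s t H x] by blast
  have "poly (pCons a H) (x+s+t) - poly (pCons a H) (x+t) - poly (pCons a H) (x+s) + poly (pCons a H) x
   - t * (poly (pderiv (pCons a H)) (x+s) - poly (pderiv (pCons a H)) x)
     = x * (poly H (x+s+t) - poly H (x+t) - poly H (x+s) + poly H x
   - t * (poly (pderiv H) (x+s) - poly (pderiv H) x))
       + s * (poly H (x + s + t) - poly H (x+s) - t * poly (pderiv H) (x+s))
       + t * (poly H (x+s+t) - poly H (x+t) - poly H (x+s) + poly H x)"
    by (simp add: pderiv_pCons algebra_simps)
  also have "\<dots> = x * (s * t^2 * k) + s * (t^2 * k1) + t * (s * t * k2)" by (subst k, subst k1, subst k2, rule refl)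
  also have "\<dots> = s * t^2 * (x * k + k1 + k2)" by (simp add: algebra_simps power2_eq_square)
  finally show ?case by simp
qed



lemma prod_cong_pow:
  fixes A :: "nat \<Rightarrow> int"
  assumes "\<forall>r<n. Q dvd A r - A 0"
  shows "Q dvd (\<Prod>r<n. A r) - A 0 ^ n"
  using assms
proof (induction n)
  case 0 then show ?case by simp
next
  case (Suc n)
  then have ih: "Q dvd (\<Prod>r<n. A r) - A 0 ^ n" by simp
  have a: "Q dvd A n - A 0" using Suc by simp
  have "(\<Prod>r<Suc n. A r) - A 0 ^ Suc n = ((\<Prod>r<n. A r) - A 0 ^ n) * A n + A 0 ^ n * (A n - A 0)"
    by (simp add: algebra_simps)
  then show ?case using ih a by (simp add: dvd_add dvd_mult dvd_mult2)
qed

lemma prod_lemma: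
  fixes A B :: "nat \<Rightarrow> int"
  assumes T: "T \<ge> 1" and hB: "\<forall>r<n. Q^T dvd B r - A r" and hA: "\<forall>r<n. Q dvd A r - A 0"
  shows "Q^(T+1) dvd A 0 * ((\<Prod>r<n. B r) - (\<Prod>r<n. A r)) - (\<Sum>r<n. B r - A r) * A 0 ^ n"
  using hB hA
proof (induction n)
  case 0 then show ?case by simp
next
  case (Suc n)
  define X where "X = (\<Prod>r<n. A r)"
  define Y where "Y = (\<Prod>r<n. B r)"
  define S where "S = (\<Sum>r<n. B r - A r)"
  have ih: "Q^(T+1) dvd A 0 * (Y - X) - S * A 0 ^ n" using Suc unfolding X_def Y_def S_def by simp
  have S: "Q^T dvd S" unfolding S_def using Suc.prems by (auto intro!: dvd_sum)
  have bn: "Q^T dvd B n - A n" using Suc.prems by simp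
  have an: "Q dvd A n - A 0" using Suc.prems by simp
  have qT: "Q dvd Q^T" using T by (simp add: dvd_power)
  have bn1: "Q dvd B n - A 0"
  proof -
    have "Q dvd (B n - A n) + (A n - A 0)" using bn qT an by (meson dvd_add dvd_trans)
    then show ?thesis by simp
  qed
  have xp: "Q dvd X - A 0 ^ n" unfolding X_def by (rule prod_cong_pow) (use Suc.prems in auto)
  have e: "A 0 * ((\<Prod>r<Suc n. B r) - (\<Prod>r<Suc n. A r)) - (\<Sum>r<Suc n. B r - A r) * A 0 ^ Suc n
     = (A 0 * (Y - X) - S * A 0 ^ n) * B n + (S * (B n - A 0)) * A 0 ^ n + A 0 * ((B n - A n) * (X - A 0 ^ n))"
    unfolding X_def Y_def S_def by (simp add: algebra_simps)
  have t2: "Q^(T+1) dvd S * (B n - A 0)" using mult_dvd_mono[OF S bn1] by (simp add: mult.commute)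
  have t3: "Q^(T+1) dvd (B n - A n) * (X - A 0 ^ n)" using mult_dvd_mono[OF bn xp] by (simp add: mult.commute)
  show ?case unfolding e using ih t2 t3 by (simp add: dvd_add dvd_mult dvd_mult2)
qed

lemma two_sum: "2 * (\<Sum>r<n. int r) = int n * (int n - 1)"
  by (induction n) (auto simp: algebra_simps)



locale oddprime =
  fixes p :: nat
  assumes pp: "prime p" and podd: "odd p"
begin

definition Gp :: "int poly" where "Gp = (\<Prod>j\<in>{1..<p}. [:int j, 1:])"

lemma poly_Gp: "poly Gp x = (\<Prod>j\<in>{1..<p}. x + int j)"
  unfolding Gp_def by (simp add: poly_prod add.commute)

lemma qprime: "prime (int p)" using pp by (simp add: prime_nat_int_transfer)

lemma p_ge3: "p \<ge> 3"
proof -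
  have "p \<ge> 2" using pp prime_ge_2_nat by blast
  moreover have "p \<noteq> 2" using podd by auto
  ultimately show ?thesis by simp
qed

lemma Gp0_not_dvd: "\<not> int p dvd poly Gp 0"
proof
  assume "int p dvd poly Gp 0"
  then have "int p dvd (\<Prod>j\<in>{1..<p}. int j)" by (simp add: poly_Gp)
  then obtain j where j: "j \<in> {1..<p}" "int p dvd int j"
    using prime_dvd_prod_iff[OF _ qprime, of "{1..<p}" int] by blast
  then have "p dvd j" by simp
  then show False using j by (auto dest: dvd_imp_le)
qed

lemma Gp_unit: "\<not> int p dvd poly Gp (int p * y)"
proof
  assume h: "int p dvd poly Gp (int p * y)"
  have "int p * y dvd poly Gp (0 + int p * y) - poly Gp 0" by (rule poly_diff_dvd)
  then have "int p dvd poly Gp (int p * y) - poly Gp 0" by (auto intro: dvd_mult_left)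
  with h have "int p dvd poly Gp (int p * y) - (poly Gp (int p * y) - poly Gp 0)"
    by (rule dvd_diff)
  then have "int p dvd poly Gp 0" by simp
  with Gp0_not_dvd show False by simp
qed

lemma Gp_sym: "poly Gp (- int p - x) = poly Gp x"
proof -
  have "poly Gp (- int p - x) = (\<Prod>j\<in>{1..<p}. - int p - x + int j)" by (simp add: poly_Gp)
  also have "\<dots> = (\<Prod>j\<in>{1..<p}. - int p - x + int (p + 1 - Suc j))"
    by (subst prod.atLeastLessThan_rev) simp
  also have "\<dots> = (\<Prod>j\<in>{1..<p}. - (x + int j))"
    by (rule prod.cong) auto
  also have "\<dots> = (-1) ^ (p - 1) * (\<Prod>j\<in>{1..<p}. x + int j)"
    using prod_uminus[of "\<lambda>j. x + int j" "{1..<p}"] by simp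
  also have "(-1::int) ^ (p - 1) = 1"
  proof -
    have "even (p - 1)" using podd p_ge3 by simp
    then obtain k where "p - 1 = 2 * k" by blast
    then show ?thesis by (simp add: power_mult)
  qed
  finally show ?thesis by (simp add: poly_Gp)
qed

lemma q_not_dvd_2: "\<not> int p dvd 2"
proof
  assume "int p dvd 2" then have "int p dvd int 2" by simp
  then have "p dvd 2" by (simp only: of_nat_dvd_iff)
  then show False using p_ge3 by (auto dest: dvd_imp_le)
qed

lemma Gp_deriv0: "int p dvd poly (pderiv Gp) 0"
proof -
  have "poly Gp = poly (Gp \<circ>\<^sub>p [:- int p, -1:])"
  proof (rule ext)
    fix x
    have "poly (Gp \<circ>\<^sub>p [:- int p, -1:]) x = poly Gp (- int p - x)" by (simp add: poly_pcompose)
    then show "poly Gp x = poly (Gp \<circ>\<^sub>p [:- int p, -1:]) x" using Gp_sym by simp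
  qed
  then have e: "Gp = Gp \<circ>\<^sub>p [:- int p, -1:]" by (simp only: poly_eq_poly_eq_iff)
  have "pderiv (Gp \<circ>\<^sub>p [:- int p, -1:]) = pderiv Gp \<circ>\<^sub>p [:- int p, -1:] * [:-1:]"
    by (simp add: pderiv_pcompose pderiv_pCons)
  then have "pderiv Gp = pderiv Gp \<circ>\<^sub>p [:- int p, -1:] * [:-1:]"
    using arg_cong[OF e, of pderiv] by (rule trans[rotated])
  then have "poly (pderiv Gp) 0 = poly (pderiv Gp \<circ>\<^sub>p [:- int p, -1:] * [:-1:]) 0"
    by (rule arg_cong)
  then have d: "poly (pderiv Gp) 0 = - poly (pderiv Gp) (- int p)"
    by (simp add: poly_pcompose)
  have "int p dvd poly (pderiv Gp) (- int p + int p) - poly (pderiv Gp) (- int p)"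
    by (rule poly_diff_dvd)
  then have "int p dvd poly (pderiv Gp) 0 + poly (pderiv Gp) 0" using d by simp
  then have "int p dvd 2 * poly (pderiv Gp) 0" by (simp only: mult_2)
  moreover have "\<not> int p dvd 2" by (rule q_not_dvd_2)
  ultimately show ?thesis using prime_dvd_mult_iff[OF qprime] by blast
qed

lemma L1:
  assumes "int p ^ i dvd u"
  shows "int p ^ (2 + i) dvd poly Gp (int p * (a + u)) - poly Gp (int p * a)"
proof -
  define h where "h = int p * u"
  define Y where "Y = int p * a"
  have e: "int p * (a + u) = Y + h" unfolding h_def Y_def by (simp add: algebra_simps)
  obtain k where k: "poly Gp (Y + h) - poly Gp Y - h * poly (pderiv Gp) Y = h^2 * k"
    using poly_taylor1[of h Gp Y] by blast
  have "int p * a dvd poly (pderiv Gp) (0 + int p * a) - poly (pderiv Gp) 0" by (rule poly_diff_dvd)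
  then have "int p dvd poly (pderiv Gp) Y - poly (pderiv Gp) 0" unfolding Y_def
    by (auto intro: dvd_mult_left)
  then have "int p dvd (poly (pderiv Gp) Y - poly (pderiv Gp) 0) + poly (pderiv Gp) 0"
    using Gp_deriv0 by (rule dvd_add)
  then have "int p dvd poly (pderiv Gp) Y" by simp
  then obtain c where c: "poly (pderiv Gp) Y = int p * c" by blast
  obtain v where v: "u = int p ^ i * v" using assms by blast
  have "poly Gp (int p * (a + u)) - poly Gp (int p * a) = h * poly (pderiv Gp) Y + h^2 * k"
    using k e Y_def by (simp add: algebra_simps)
  also have "\<dots> = int p ^ (2 + i) * (v * c + int p ^ i * v^2 * k)"
    unfolding h_def c v by (simp add: algebra_simps power2_eq_square power_add)
  finally show ?thesis by simp
qed

definition Pb :: "int \<Rightarrow> nat \<Rightarrow> int" where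
  "Pb a w = (\<Prod>k<w. poly Gp (int p * (a + int k)))"

definition HP :: "nat \<Rightarrow> int poly" where
  "HP w = (\<Prod>k<w. Gp \<circ>\<^sub>p [:int p * int k, 1:])"

lemma Pb_HP: "Pb a w = poly (HP w) (int p * a)"
  unfolding Pb_def HP_def by (simp add: poly_prod poly_pcompose algebra_simps)

lemma Pb_add: "Pb a (w1 + w2) = Pb a w1 * Pb (a + int w1) w2"
proof (induction w2)
  case 0 then show ?case by (simp add: Pb_def)
next
  case (Suc w2)
  then show ?case by (simp add: Pb_def algebra_simps)
qed

lemma Pb_mult: "Pb a (n * w) = (\<Prod>r<n. Pb (a + int r * int w) w)"
proof (induction n)
  case 0 then show ?case by (simp add: Pb_def)
next
  case (Suc n)
  have "Pb a (Suc n * w) = Pb a (n * w + w)" by (simp add: add.commute)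
  also have "\<dots> = Pb a (n*w) * Pb (a + int (n * w)) w" by (rule Pb_add)
  finally show ?case using Suc by (simp add: algebra_simps)
qed

lemma Pb_unit: "\<not> int p dvd Pb a w"
proof (induction w)
  case 0 then show ?case using p_ge3 by (simp add: Pb_def)
next
  case (Suc w)
  have "Pb a (Suc w) = Pb a w * poly Gp (int p * (a + int w))" by (simp add: Pb_def)
  then show ?case using Suc.IH Gp_unit[of "a + int w"] prime_dvd_mult_iff[OF qprime] by simp
qed

lemma base_case:
  assumes "int p ^ i dvd u"
  shows "int p ^ (2 + i) dvd Pb (a + u) w - Pb a w"
proof (induction w)
  case 0 then show ?case by (simp add: Pb_def)
next
  case (Suc w)
  have x: "int p ^ (2 + i) dvd poly Gp (int p * ((a + int w) + u)) - poly Gp (int p * (a + int w))"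
    by (rule L1[OF assms])
  have eq: "Pb (a + u) (Suc w) - Pb a (Suc w) =
     (Pb (a + u) w - Pb a w) * poly Gp (int p * (a + u + int w))
     + Pb a w * (poly Gp (int p * ((a + int w) + u)) - poly Gp (int p * (a + int w)))"
    by (simp add: Pb_def algebra_simps)
  have d1: "int p ^ (2 + i) dvd (Pb (a + u) w - Pb a w) * poly Gp (int p * (a + u + int w))"
    using Suc.IH by (rule dvd_mult2)
  have d2: "int p ^ (2 + i) dvd Pb a w * (poly Gp (int p * ((a + int w) + u)) - poly Gp (int p * (a + int w)))"
    using x by (rule dvd_mult)
  show ?case unfolding eq using d1 d2 by (rule dvd_add)
qed

lemma q_dvd_sum: "int p dvd (\<Sum>r<p. int r)"
proof -
  have "int p dvd 2 * (\<Sum>r<p. int r)" unfolding two_sum by simp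
  then show ?thesis using q_not_dvd_2 prime_dvd_mult_iff[OF qprime] by simp
qed

lemma pow_dvd_cancel:
  assumes "int p ^ n dvd y * z" "\<not> int p dvd y"
  shows "int p ^ n dvd z"
proof -
  have "coprime y (int p ^ n)" using prime_imp_power_coprime[OF qprime assms(2)] .
  then have "coprime (int p ^ n) y" by (simp add: coprime_commute)
  then show ?thesis using assms(1) coprime_dvd_mult_right_iff[of "int p ^ n" y z] by simp
qed

lemma core: "\<forall>a u w. int p ^ i dvd u \<longrightarrow> int p ^ j dvd int w \<longrightarrow>
   int p ^ (2 + i + j) dvd Pb (a + u) w - Pb a w"
proof (induction j)
  case 0 then show ?case using base_case by simp
next
  case (Suc j)
  show ?case
  proof (intro allI impI)
    fix a u :: int and w :: nat
    assume hu: "int p ^ i dvd u" and hw: "int p ^ Suc j dvd int w"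
    define q where "q = int p"
    have "int p dvd int p ^ Suc j" by simp
    then have "int p dvd int w" using hw by (rule dvd_trans)
    then have "p dvd w" by presburger
    then obtain w0 where w0: "w = p * w0" by (rule dvdE)
    have hw0: "q ^ j dvd int w0"
    proof -
      have "q * q ^ j dvd q * int w0" using hw w0 q_def by simp
      moreover have "q \<noteq> 0" using p_ge3 q_def by simp
      ultimately show ?thesis by simp
    qed
    define A where "A r = Pb (a + int r * int w0) w0" for r
    define B where "B r = Pb (a + u + int r * int w0) w0" for r
    define H where "H = HP w0"
    define x where "x = q * a"
    define s where "s = q * u"
    define t where "t r = q * int w0 * int r" for r
    define c where "c = poly (pderiv H) (x + s) - poly (pderiv H) x"
    have Ar: "A r = poly H (x + t r)" for r unfolding A_def H_def x_def t_def Pb_HP q_def by (simp add: algebra_simps)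
    have Br: "B r = poly H (x + s + t r)" for r unfolding B_def H_def x_def t_def s_def Pb_HP q_def by (simp add: algebra_simps)
    have A0: "A 0 = poly H x" using Ar[of 0] by (simp add: t_def)
    have B0: "B 0 = poly H (x + s)" using Br[of 0] by (simp add: t_def)
    have hB: "\<forall>r<p. q ^ (2 + i + j) dvd B r - A r"
    proof (intro allI impI)
      fix r
      have "B r = Pb ((a + int r * int w0) + u) w0" unfolding B_def by (simp add: algebra_simps)
      moreover have "q ^ (2 + i + j) dvd Pb ((a + int r * int w0) + u) w0 - Pb (a + int r * int w0) w0"
        using Suc.IH hu hw0 unfolding q_def by blast
      ultimately show "q ^ (2 + i + j) dvd B r - A r" unfolding A_def by simp
    qed
    have hA: "\<forall>r<p. q dvd A r - A 0"
    proof (intro allI impI)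
      fix r
      have "t r dvd poly H (x + t r) - poly H x" using poly_diff_dvd[of "t r" H x] by simp
      moreover have "q dvd t r" unfolding t_def by simp
      ultimately have "q dvd poly H (x + t r) - poly H x" by (rule dvd_trans[rotated])
      then show "q dvd A r - A 0" using Ar A0 by simp
    qed
    have PL: "q ^ (2 + i + j + 1) dvd A 0 * ((\<Prod>r<p. B r) - (\<Prod>r<p. A r)) - (\<Sum>r<p. B r - A r) * A 0 ^ p"
      by (rule prod_lemma) (use hB hA in auto)
    have qi: "q ^ (1 + i) dvd s" unfolding s_def using hu q_def by simp
    have hc: "q ^ (1 + i) dvd c" unfolding c_def using dvd_trans[OF qi poly_diff_dvd[of s "pderiv H" x]]
      by simp
    have rem: "q ^ (3 + i + j) dvd (B r - A r) - (B 0 - A 0) - t r * c" for r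
    proof -
      have "s * (t r)^2 dvd poly H (x+s+t r) - poly H (x+t r) - poly H (x+s) + poly H x - t r * c"
        unfolding c_def by (rule poly_T2)
      moreover have "q ^ (3 + i + j) dvd s * (t r)^2"
      proof -
        have "q ^ (2 + 2*j) dvd (t r)^2"
        proof -
          obtain v where "int w0 = q^j * v" using hw0 by blast
          then have "(t r)^2 = q ^ (2 + 2*j) * (v^2 * int r ^ 2)" unfolding t_def
            by (simp add: power_mult_distrib power_add power_mult algebra_simps power2_eq_square)
          then show ?thesis by simp
        qed
        then have "q^(1+i) * q ^ (2 + 2*j) dvd s * (t r)^2" using qi by (simp add: mult_dvd_mono)
        moreover have "q ^ (3 + i + j) dvd q^(1+i) * q ^ (2 + 2*j)"
        proof -
          have "q^(1+i) * q ^ (2 + 2*j) = q ^ (3 + i + 2*j)" by (simp add: power_add power_Suc algebra_simps power3_eq_cube)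
          then show ?thesis by (simp add: le_imp_power_dvd)
        qed
        ultimately show ?thesis by (rule dvd_trans[rotated])
      qed
      ultimately have d1: "q ^ (3 + i + j) dvd poly H (x+s+t r) - poly H (x+t r) - poly H (x+s) + poly H x - t r * c"
        by (rule dvd_trans[rotated])
      have eq1: "B r - A r - (B 0 - A 0) - t r * c = poly H (x+s+t r) - poly H (x+t r) - poly H (x+s) + poly H x - t r * c"
        unfolding Ar Br by (simp add: t_def)
      show ?thesis unfolding eq1 by (rule d1)
    qed
    have sumeq: "(\<Sum>r<p. B r - A r) = (\<Sum>r<p. (B r - A r) - (B 0 - A 0) - t r * c)
         + int p * (B 0 - A 0) + (q * int w0 * c) * (\<Sum>r<p. int r)"
      by (simp add: sum.distrib sum_subtractf sum_distrib_left t_def algebra_simps)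
    have S1: "q ^ (3 + i + j) dvd (\<Sum>r<p. (B r - A r) - (B 0 - A 0) - t r * c)"
      using rem by (auto intro: dvd_sum)
    have S2: "q ^ (3 + i + j) dvd int p * (B 0 - A 0)"
    proof -
      have "q ^ (2 + i + j) dvd B 0 - A 0" using hB p_ge3 by auto
      then have "q * q ^ (2 + i + j) dvd q * (B 0 - A 0)" by simp
      then show ?thesis by (simp add: q_def power_add power_Suc algebra_simps power3_eq_cube)
    qed
    have S3: "q ^ (3 + i + j) dvd (q * int w0 * c) * (\<Sum>r<p. int r)"
    proof -
      have "q * q^j * q^(1+i) * q dvd (q * int w0 * c) * (\<Sum>r<p. int r)"
        using hw0 hc q_dvd_sum q_def by (intro mult_dvd_mono) auto
      moreover have "q ^ (3 + i + j) = q * q^j * q^(1+i) * q" by (simp add: power_add power_Suc algebra_simps power3_eq_cube)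
      ultimately show ?thesis by simp
    qed
    have S: "q ^ (2 + i + j + 1) dvd (\<Sum>r<p. B r - A r) * A 0 ^ p"
    proof -
      have "q ^ (3 + i + j) dvd (\<Sum>r<p. B r - A r)" unfolding sumeq using S1 S2 S3 by (simp add: dvd_add)
      then have d: "q ^ (3 + i + j) dvd (\<Sum>r<p. B r - A r) * A 0 ^ p" by (rule dvd_mult2)
      have e: "2 + i + j + 1 = 3 + i + j" by simp
      show ?thesis unfolding e by (rule d)
    qed
    have "q ^ (2 + i + j + 1) dvd A 0 * ((\<Prod>r<p. B r) - (\<Prod>r<p. A r))"
    proof -
      have "A 0 * ((\<Prod>r<p. B r) - (\<Prod>r<p. A r)) = (A 0 * ((\<Prod>r<p. B r) - (\<Prod>r<p. A r)) - (\<Sum>r<p. B r - A r) * A 0 ^ p) + (\<Sum>r<p. B r - A r) * A 0 ^ p"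
        by simp
      then show ?thesis using dvd_add[OF PL S] by simp
    qed
    moreover have "\<not> int p dvd A 0" unfolding A_def by (rule Pb_unit)
    ultimately have "q ^ (2 + i + j + 1) dvd (\<Prod>r<p. B r) - (\<Prod>r<p. A r)"
      unfolding q_def by (rule pow_dvd_cancel)
    moreover have "Pb (a + u) w = (\<Prod>r<p. B r)" and "Pb a w = (\<Prod>r<p. A r)"
      unfolding w0 Pb_mult B_def A_def by simp_all
    ultimately show "int p ^ (2 + i + Suc j) dvd Pb (a + u) w - Pb a w" by (simp add: q_def)
  qed
qed

lemma fact_add_int: "(fact (m + k) :: int) = fact m * (\<Prod>j\<in>{1..k}. int m + int j)"
proof (induction k)
  case 0 then show ?case by simp
next
  case (Suc k)
  have "(fact (m + Suc k) :: int) = fact (m + k) * (int m + int (Suc k))"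
    by (simp add: algebra_simps)
  also have "\<dots> = fact m * ((\<Prod>j\<in>{1..k}. int m + int j) * (int m + int (Suc k)))"
    using Suc by simp
  also have "(\<Prod>j\<in>{1..k}. int m + int j) * (int m + int (Suc k)) = (\<Prod>j\<in>{1..Suc k}. int m + int j)"
    by (simp add: prod.nat_ivl_Suc' mult.commute)
  finally show ?case .
qed

lemma fact_p_mult: "(fact (p * n) :: int) = int p ^ n * fact n * Pb 0 n"
proof (induction n)
  case 0 then show ?case by (simp add: Pb_def)
next
  case (Suc n)
  have "(fact (p * Suc n) :: int) = fact (p * n + p)" by (simp add: algebra_simps)
  also have "\<dots> = fact (p * n) * (\<Prod>j\<in>{1..p}. int (p * n) + int j)" by (rule fact_add_int)
  also have "(\<Prod>j\<in>{1..p}. int (p * n) + int j) = (\<Prod>j\<in>{1..<p}. int (p * n) + int j) * (int (p * n) + int p)"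
  proof -
    have "{1..p} = insert p {1..<p}" using p_ge3 by auto
    then show ?thesis by (simp add: mult.commute)
  qed
  also have "(\<Prod>j\<in>{1..<p}. int (p * n) + int j) = poly Gp (int p * (0 + int n))"
    by (simp add: poly_Gp)
  also have "int (p * n) + int p = int p * int (Suc n)" by (simp add: algebra_simps)
  finally show ?case using Suc by (simp add: Pb_def algebra_simps)
qed

lemma Pb_unit0: "\<not> int p dvd Pb 0 n" by (rule Pb_unit)

lemma Dsplit:
  assumes "int p ^ i dvd int u" "int p ^ j dvd int w"
  shows "int p ^ (2 + i + j) dvd Pb 0 (u + w) - Pb 0 u * Pb 0 w"
proof -
  have "Pb 0 (u + w) = Pb 0 u * Pb (int u) w" using Pb_add[of 0 u w] by simp
  then have e: "Pb 0 (u + w) - Pb 0 u * Pb 0 w = Pb 0 u * (Pb (0 + int u) w - Pb 0 w)" by (simp add: algebra_simps)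
  have "int p ^ (2 + i + j) dvd Pb (0 + int u) w - Pb 0 w" using core assms by blast
  then show ?thesis unfolding e by (rule dvd_mult)
qed


end


context oddprime
begin

lemma vdiv:
  fixes c X :: nat
  assumes "p ^ e dvd p ^ s * c * X" "\<not> p dvd c" "s \<le> e"
  shows "p ^ (e - s) dvd X"
proof -
  have "p ^ s * p ^ (e - s) dvd p ^ s * (c * X)" using assms(1,3)
    by (simp add: power_add[symmetric] mult.assoc)
  then have "p ^ (e - s) dvd c * X" using p_ge3 by simp
  moreover have "coprime c (p ^ (e - s))" by (rule prime_imp_power_coprime[OF pp assms(2)])
  then have "coprime (p ^ (e - s)) c" by (simp add: coprime_commute)
  ultimately show ?thesis using coprime_dvd_mult_right_iff[of "p ^ (e - s)" c X] by simp
qed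

lemma ident:
  fixes M L N :: nat
  assumes "L \<le> M" "M \<le> N" "1 \<le> M"
  shows "int ((p*M choose p*L) * ((p*N - 1) choose (p*M - 1))) * (Pb 0 L * Pb 0 (M - L) * Pb 0 (N - M))
       = int ((M choose L) * ((N - 1) choose (M - 1))) * Pb 0 N"
proof -
  define c1 where "c1 = int (p*M choose p*L)"
  define c2 where "c2 = int ((p*N - 1) choose (p*M - 1))"
  define c3 where "c3 = int (p*N choose p*M)"
  define b1 where "b1 = int (M choose L)"
  define b2 where "b2 = int ((N - 1) choose (M - 1))"
  define b3 where "b3 = int (N choose M)"
  define DD where "DD = Pb 0 L * Pb 0 (M - L) * Pb 0 (N - M)"
  define FF where "FF = (fact L * fact (M - L) * fact (N - M) :: int)"
  have u1: "(fact L * fact (M - L) :: int) * b1 = fact M"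
    unfolding b1_def using arg_cong[OF binomial_fact_lemma[OF assms(1)], of int] by simp
  have u2: "(fact M * fact (N - M) :: int) * b3 = fact N"
    unfolding b3_def using arg_cong[OF binomial_fact_lemma[OF assms(2)], of int] by simp
  have "p*L \<le> p*M" "p*M \<le> p*N" using assms by simp_all
  then have s1: "(fact (p*L) * fact (p*M - p*L) :: int) * c1 = fact (p*M)"
    and s2: "(fact (p*M) * fact (p*N - p*M) :: int) * c3 = fact (p*N)"
    unfolding c1_def c3_def using arg_cong[OF binomial_fact_lemma, of _ _ int] by simp_all
  have a1: "int M * b3 = int N * b2"
  proof -
    have "Suc (M - 1) * (N choose Suc (M - 1)) = N * ((N - 1) choose (M - 1))" by (rule binomial_absorption)
    then show ?thesis unfolding b3_def b2_def using assms(3) by (metis Suc_pred' less_eq_Suc_le of_nat_mult One_nat_def)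
  qed
  have a2: "int (p*M) * c3 = int (p*N) * c2"
  proof -
    have "Suc (p*M - 1) * (p*N choose Suc (p*M - 1)) = p*N * ((p*N - 1) choose (p*M - 1))" by (rule binomial_absorption)
    moreover have "Suc (p*M - 1) = p * M" using assms(3) p_ge3 by (simp add: Suc_pred')
    ultimately show ?thesis unfolding c3_def c2_def by (metis of_nat_mult)
  qed
  have pml: "p*M - p*L = p*(M - L)" "p*N - p*M = p*(N - M)" by (simp_all add: diff_mult_distrib2)
  have unsc: "FF * (b1 * b3) = fact N"
  proof -
    have "FF * (b1 * b3) = ((fact L * fact (M - L) :: int) * b1) * fact (N - M) * b3"
      unfolding FF_def by (simp add: algebra_simps)
    also have "\<dots> = (fact M * fact (N - M) :: int) * b3" by (simp only: u1)
    also have "\<dots> = fact N" by (rule u2)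
    finally show ?thesis .
  qed
  have sc: "int p ^ N * (FF * DD * (c1 * c3)) = int p ^ N * fact N * Pb 0 N"
  proof -
    have "int p ^ N * (FF * DD * (c1 * c3)) =
       (int p ^ L * fact L * Pb 0 L) * (int p ^ (M - L) * fact (M - L) * Pb 0 (M - L)) * (int p ^ (N - M) * fact (N - M) * Pb 0 (N - M)) * (c1 * c3)"
    proof -
      have "int p ^ N = int p ^ L * int p ^ (M - L) * int p ^ (N - M)"
        using assms by (simp add: power_add[symmetric])
      then show ?thesis unfolding FF_def DD_def by (simp add: algebra_simps)
    qed
    also have "\<dots> = fact (p*L) * fact (p*(M - L)) * fact (p*(N - M)) * (c1 * c3)"
      by (simp add: fact_p_mult)
    also have "\<dots> = ((fact (p*L) * fact (p*M - p*L) :: int) * c1) * fact (p*N - p*M) * c3"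
      unfolding pml by (simp add: algebra_simps)
    also have "\<dots> = (fact (p*M) * fact (p*N - p*M) :: int) * c3" by (simp only: s1)
    also have "\<dots> = fact (p*N)" by (rule s2)
    also have "\<dots> = int p ^ N * fact N * Pb 0 N" by (rule fact_p_mult)
    finally show ?thesis .
  qed
  have "FF * DD * (c1 * c3) = fact N * Pb 0 N" using sc p_ge3 by (simp add: mult.assoc)
  then have e1: "FF * (DD * (c1 * c3)) = FF * (b1 * b3 * Pb 0 N)" using unsc by (simp add: algebra_simps)
  have "FF \<noteq> 0" unfolding FF_def by simp
  then have e2: "DD * c1 * c3 = b1 * b3 * Pb 0 N" using e1 by (simp add: mult.assoc)
  have "int (p*N) * (DD * c1 * c2) = DD * c1 * (int (p*N) * c2)" by (simp add: algebra_simps)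
  also have "\<dots> = DD * c1 * (int (p*M) * c3)" by (simp only: a2)
  also have "\<dots> = int p * int M * (DD * c1 * c3)" by (simp add: algebra_simps)
  also have "\<dots> = int p * int M * (b1 * b3 * Pb 0 N)" by (simp only: e2)
  also have "\<dots> = int p * b1 * (int M * b3) * Pb 0 N" by (simp add: algebra_simps)
  also have "\<dots> = int p * b1 * (int N * b2) * Pb 0 N" by (simp only: a1)
  also have "\<dots> = int (p*N) * (b1 * b2 * Pb 0 N)" by (simp add: algebra_simps)
  finally have "int (p*N) * (DD * c1 * c2) = int (p*N) * (b1 * b2 * Pb 0 N)" .
  moreover have "int (p*N) \<noteq> 0" using assms p_ge3 by simp
  ultimately have "DD * c1 * c2 = b1 * b2 * Pb 0 N" by simp
  then show ?thesis unfolding c1_def c2_def b1_def b2_def DD_def by (simp add: algebra_simps)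
qed

lemma absorb: "1 \<le> k \<Longrightarrow> k * (n choose k) = n * ((n - 1) choose (k - 1))"
  using binomial_absorption[of "k - 1" n] by simp

lemma beta0_case:
  fixes m l t :: nat
  assumes "p ^ al dvd m" "\<not> p dvd l" "1 \<le> l" "1 \<le> m" "1 \<le> al"
  shows "p ^ (2 * al) dvd (m choose l) * ((m * t + l - 1) choose (m - 1))"
proof (cases "l \<le> m")
  case False then have "m choose l = 0" by (simp add: binomial_eq_0)
  then show ?thesis by (simp only: mult_0 dvd_0_right)
next
  case True
  have eq1: "l * (m choose l) = m * ((m - 1) choose (l - 1))" by (rule absorb) (use assms in simp)
  have "p ^ al dvd m * ((m - 1) choose (l - 1))" by (rule dvd_mult2[OF assms(1)])
  then have "p ^ al dvd p ^ 0 * l * (m choose l)" unfolding eq1[symmetric] by simp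
  then have d1: "p ^ al dvd (m choose l)" using vdiv[of al 0 l "m choose l"] assms(2) by simp
  define n where "n = m * t + l"
  have eq2: "m * (n choose m) = n * ((n - 1) choose (m - 1))" by (rule absorb) (use assms in simp)
  have "p ^ al dvd m * (n choose m)" by (rule dvd_mult2[OF assms(1)])
  then have "p ^ al dvd p ^ 0 * n * ((n - 1) choose (m - 1))" unfolding eq2 by simp
  moreover have "\<not> p dvd n"
  proof
    assume "p dvd n"
    moreover have "p dvd m * t"
    proof -
      have "p dvd p ^ al" using assms(5) by (simp add: dvd_power)
      then have "p dvd m" using assms(1) by (rule dvd_trans)
      then show ?thesis by (rule dvd_mult2)
    qed
    ultimately have "p dvd l" unfolding n_def by (simp add: dvd_add_right_iff)
    then show False using assms by simp
  qed
  ultimately have d2: "p ^ al dvd ((n - 1) choose (m - 1))" using vdiv[of al 0 n "(n - 1) choose (m - 1)"] by simp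
  show ?thesis using mult_dvd_mono[OF d1 d2] unfolding n_def by (simp add: mult_2 power_add)
qed

lemma nat2int: "p ^ k dvd n \<Longrightarrow> int p ^ k dvd int n"
proof -
  assume "p ^ k dvd n"
  then have "int (p ^ k) dvd int n" by (simp only: of_nat_dvd_iff)
  then show ?thesis by (simp only: of_nat_power)
qed


lemma dvd_pow_le: "k \<le> n \<Longrightarrow> (x::'a::comm_semiring_1) ^ k dvd x ^ n"
  by (rule le_imp_power_dvd)

lemma beta_pos_case:
  fixes M L t a b e s :: nat
  assumes M: "M = p ^ e * a" and L: "L = p ^ s * b" and pa: "\<not> p dvd a" and pb: "\<not> p dvd b"
    and a0: "a > 0" and b0: "b > 0" and t1: "t \<ge> 1"
  defines "N \<equiv> M * t + L"
  shows "int p ^ (2 * (e + 1)) dvd int ((p*M choose p*L) * ((p*N - 1) choose (p*M - 1)))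
           - int ((M choose L) * ((N - 1) choose (M - 1)))"
proof (cases "L \<le> M")
  case False
  then have "p*M < p*L" using p_ge3 by simp
  then have z1: "(p*M choose p*L) = 0" by (simp add: binomial_eq_0)
  have z2: "(M choose L) = 0" using False by (simp add: binomial_eq_0)
  show ?thesis unfolding z1 z2 by simp
next
  case True
  define x where "x = L"
  define y where "y = M - L"
  define z where "z = N - M"
  have M1: "M \<ge> 1" using M a0 p_ge3 by simp
  have L1: "L \<ge> 1" using L b0 p_ge3 by simp
  have MN: "M \<le> N" unfolding N_def using t1 by (metis le_add1 mult_le_mono2 mult_1_right order_trans)
  have zeq: "z = M * (t - 1) + L" unfolding z_def N_def using t1
    by (simp add: diff_mult_distrib2)
  have Mxy: "M = x + y" unfolding x_def y_def using True by simp
  have NMz: "N = M + z" unfolding z_def using MN by simp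
  define DD where "DD = Pb 0 x * Pb 0 y * Pb 0 z"
  define A where "A = (p*M choose p*L) * ((p*N - 1) choose (p*M - 1))"
  define B where "B = (M choose L) * ((N - 1) choose (M - 1))"
  have id: "int A * DD = int B * Pb 0 N"
    unfolding A_def B_def DD_def x_def y_def z_def using ident[OF True MN M1] by simp
  have split: "Pb 0 N - DD = (Pb 0 (M + z) - Pb 0 M * Pb 0 z) + Pb 0 z * (Pb 0 (x + y) - Pb 0 x * Pb 0 y)"
    unfolding DD_def NMz Mxy by (simp add: algebra_simps)
  have key: "int p ^ (2 * (e + 1)) dvd int B * (Pb 0 N - DD)"
  proof (cases "e \<le> s")
    case True
    have hx: "p ^ e dvd x" unfolding x_def L using True by (simp add: dvd_mult2 le_imp_power_dvd)
    have hM: "p ^ e dvd M" unfolding M by simp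
    have hy: "p ^ e dvd y" unfolding y_def using hM hx x_def by (simp add: dvd_diff_nat)
    have hz: "p ^ e dvd z" unfolding zeq using hM hx x_def by (simp add: dvd_add dvd_mult2)
    have t1': "int p ^ (2 + e + e) dvd Pb 0 (M + z) - Pb 0 M * Pb 0 z"
      by (rule Dsplit) (use hM hz nat2int in auto)
    have t2': "int p ^ (2 + e + e) dvd Pb 0 (x + y) - Pb 0 x * Pb 0 y"
      by (rule Dsplit) (use hx hy nat2int in auto)
    have "int p ^ (2 + e + e) dvd Pb 0 N - DD" unfolding split
      using t1' dvd_mult[OF t2'] by (rule dvd_add)
    then have "int p ^ (2 + e + e) dvd int B * (Pb 0 N - DD)" by (rule dvd_mult)
    moreover have "2 * (e + 1) = 2 + e + e" by simp
    ultimately show ?thesis by (simp only:)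
  next
    case False
    then have se: "s < e" by simp
    have hx: "p ^ s dvd x" unfolding x_def L by simp
    have hM: "p ^ e dvd M" unfolding M by simp
    have hMs: "p ^ s dvd M" using hM se by (meson dvd_trans le_imp_power_dvd less_imp_le)
    have hy: "p ^ s dvd y" unfolding y_def using hMs hx x_def by (simp add: dvd_diff_nat)
    have hz: "p ^ s dvd z" unfolding zeq using hMs hx x_def by (simp add: dvd_add dvd_mult2)
    have b1: "p ^ (e - s) dvd (M choose L)"
    proof -
      have eq1: "L * (M choose L) = M * ((M - 1) choose (L - 1))" by (rule absorb) (use L1 in simp)
      have "p ^ e dvd M * ((M - 1) choose (L - 1))" by (rule dvd_mult2[OF hM])
      then have "p ^ e dvd L * (M choose L)" by (simp only: eq1)
      moreover define X where "X = M choose L"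
      ultimately have "p ^ e dvd p ^ s * b * X" using L by (simp add: mult.assoc)
      then show ?thesis unfolding X_def using vdiv pb se by simp
    qed
    have b2: "p ^ (e - s) dvd ((N - 1) choose (M - 1))"
    proof -
      define c where "c = p ^ (e - s) * a * t + b"
      have Nc: "N = p ^ s * c" unfolding N_def c_def M L using se
        by (simp add: algebra_simps power_add[symmetric])
      have pc: "\<not> p dvd c"
      proof
        assume "p dvd c"
        moreover have "p dvd p ^ (e - s) * a * t" using se by (simp add: dvd_mult2 dvd_power)
        ultimately have "p dvd b" unfolding c_def by (simp add: dvd_add_right_iff)
        then show False using pb by simp
      qed
      have eq2: "M * (N choose M) = N * ((N - 1) choose (M - 1))" by (rule absorb) (use M1 in simp)
      have "p ^ e dvd M * (N choose M)" by (rule dvd_mult2[OF hM])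
      then have "p ^ e dvd N * ((N - 1) choose (M - 1))" by (simp only: eq2)
      moreover define X where "X = (N - 1) choose (M - 1)"
      ultimately have "p ^ e dvd p ^ s * c * X" using Nc by (simp add: mult.assoc)
      then show ?thesis unfolding X_def using vdiv pc se by simp
    qed
    have hB: "int p ^ (2 * (e - s)) dvd int B"
    proof -
      have "p ^ (e - s) * p ^ (e - s) dvd B" unfolding B_def using b1 b2 by (rule mult_dvd_mono)
      then have "p ^ (2 * (e - s)) dvd B" by (simp add: mult_2 power_add)
      then show ?thesis by (rule nat2int)
    qed
    have t1': "int p ^ (2 + e + s) dvd Pb 0 (M + z) - Pb 0 M * Pb 0 z"
      by (rule Dsplit) (use hM hz nat2int in auto)
    have t2': "int p ^ (2 + s + s) dvd Pb 0 (x + y) - Pb 0 x * Pb 0 y"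
      by (rule Dsplit) (use hx hy nat2int in auto)
    have d1: "int p ^ (2 * (e + 1)) dvd int B * (Pb 0 (M + z) - Pb 0 M * Pb 0 z)"
    proof -
      have "int p ^ (2 * (e - s)) * int p ^ (2 + e + s) dvd int B * (Pb 0 (M + z) - Pb 0 M * Pb 0 z)"
        using hB t1' by (rule mult_dvd_mono)
      moreover have "int p ^ (2 * (e + 1)) dvd int p ^ (2 * (e - s)) * int p ^ (2 + e + s)"
        unfolding power_add[symmetric] using se by (intro le_imp_power_dvd) simp
      ultimately show ?thesis by (rule dvd_trans[rotated])
    qed
    have d2: "int p ^ (2 * (e + 1)) dvd int B * (Pb 0 z * (Pb 0 (x + y) - Pb 0 x * Pb 0 y))"
    proof -
      have "int p ^ (2 * (e - s)) * int p ^ (2 + s + s) dvd int B * (Pb 0 z * (Pb 0 (x + y) - Pb 0 x * Pb 0 y))"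
        using hB dvd_mult[OF t2'] by (rule mult_dvd_mono)
      moreover have "int p ^ (2 * (e + 1)) dvd int p ^ (2 * (e - s)) * int p ^ (2 + s + s)"
        unfolding power_add[symmetric] using se by (intro le_imp_power_dvd) simp
      ultimately show ?thesis by (rule dvd_trans[rotated])
    qed
    have "int p ^ (2 * (e + 1)) dvd int B * (Pb 0 (M + z) - Pb 0 M * Pb 0 z) + int B * (Pb 0 z * (Pb 0 (x + y) - Pb 0 x * Pb 0 y))"
      using d1 d2 by (rule dvd_add)
    then show ?thesis unfolding split by (simp only: distrib_left)
  qed
  have "DD * (int A - int B) = int B * (Pb 0 N - DD)" using id by (simp add: algebra_simps)
  then have "int p ^ (2 * (e + 1)) dvd DD * (int A - int B)" using key by simp
  moreover have "\<not> int p dvd DD" unfolding DD_def using Pb_unit prime_dvd_mult_iff[OF qprime] by simp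
  ultimately have "int p ^ (2 * (e + 1)) dvd int A - int B" by (rule pow_dvd_cancel)
  then show ?thesis unfolding A_def B_def .
qed

end


lemma ibinom_nat: "ibinom (int n) k = int (n choose k)"
  unfolding ibinom_def by simp

lemma ibinom_rat: "(of_int (ibinom a k) :: rat) = of_int a gchoose k"
proof (cases "k = 0")
  case True then show ?thesis by (simp add: ibinom_def)
next
  case False
  show ?thesis
  proof (cases "a \<ge> 0")
    case True
    then have "(of_int (ibinom a k) :: rat) = of_nat (nat a choose k)"
      using False by (simp add: ibinom_def)
    also have "\<dots> = of_nat (nat a) gchoose k" by (rule binomial_gbinomial)
    also have "(of_nat (nat a) :: rat) = of_int a" using True by simp
    finally show ?thesis .
  next
    case neg: False
    then have "(of_int (ibinom a k) :: rat) = (-1) ^ k * of_nat (nat (- a + int k - 1) choose k)"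
      using False by (simp add: ibinom_def)
    also have "of_nat (nat (- a + int k - 1) choose k) = (of_nat (nat (- a + int k - 1)) :: rat) gchoose k"
      by (rule binomial_gbinomial)
    also have "(of_nat (nat (- a + int k - 1)) :: rat) = of_nat k - of_int a - 1" using neg by simp
    also have "(-1) ^ k * ((of_nat k - of_int a - 1) gchoose k) = (of_int a :: rat) gchoose k"
      by (rule gbinomial_negated_upper[symmetric])
    finally show ?thesis .
  qed
qed

lemma ibinom_ff: "fact k * ibinom a k = (\<Prod>i<k. a - int i)"
proof -
  have "(of_int (fact k * ibinom a k) :: rat) = fact k * (of_int a gchoose k)"
    by (simp add: ibinom_rat)
  also have "\<dots> = (\<Prod>i = 0..<k. of_int a - of_nat i)" by (rule gbinomial_mult_fact)
  also have "\<dots> = of_int (\<Prod>i<k. a - int i)" by (simp add: atLeast0LessThan)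
  finally show ?thesis by (simp only: of_int_eq_iff)
qed

lemma ffdiff: "(h::int) dvd (\<Prod>i<k. (a + h) - int i) - (\<Prod>i<k. a - int i)"
proof (induction k)
  case 0 then show ?case by simp
next
  case (Suc k)
  define X where "X = (\<Prod>i<k. (a + h) - int i)"
  define Y where "Y = (\<Prod>i<k. a - int i)"
  have e: "(\<Prod>i<Suc k. (a + h) - int i) - (\<Prod>i<Suc k. a - int i) = (X - Y) * (a + h - int k) + Y * h"
    unfolding X_def Y_def by (simp add: algebra_simps)
  have "h dvd (X - Y) * (a + h - int k)" using Suc unfolding X_def Y_def by (rule dvd_mult2)
  moreover have "h dvd Y * h" by simp
  ultimately show ?case unfolding e by (rule dvd_add)
qed

lemma period:
  fixes Q h a :: int
  assumes "fact k * Q dvd h"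
  shows "Q dvd ibinom (a + h) k - ibinom a k"
proof -
  obtain r where r: "h * r = (\<Prod>i<k. (a + h) - int i) - (\<Prod>i<k. a - int i)"
    using ffdiff[where h=h and k=k and a=a] by (elim dvdE) (metis)
  obtain h' where h': "h = fact k * Q * h'" using assms by (auto elim!: dvdE)
  have "fact k * (ibinom (a + h) k - ibinom a k) = fact k * (Q * h' * r)"
    using r h' by (simp add: ibinom_ff right_diff_distrib algebra_simps)
  then have "ibinom (a + h) k - ibinom a k = Q * h' * r" by simp
  then show ?thesis by simp
qed

lemma nat_case:
  fixes p a b \<alpha> \<beta> t :: nat and m l :: int
  assumes "prime p" and "odd p"
    and "a > 0" and "b > 0" and "\<not> p dvd a" and "\<not> p dvd b"
    and "\<alpha> \<ge> 1" and "t \<ge> 1"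
    and "m = int (p ^ \<alpha> * a)" and "l = int (p ^ \<beta> * b)"
  shows "(int p) ^ (2 * \<alpha>) dvd
           ibinom m (nat l) * ibinom (m * int t + l - 1) (nat (m - 1))
           - (if \<beta> = 0 then 0
              else ibinom (m div int p) (nat (l div int p))
                   * ibinom ((m * int t + l) div int p - 1) (nat (m div int p - 1)))"
proof -
  interpret op: oddprime p using assms(1,2) by unfold_locales
  define mn where "mn = p ^ \<alpha> * a"
  define ln where "ln = p ^ \<beta> * b"
  have p3: "p \<ge> 3" by (rule op.p_ge3)
  have mn1: "mn \<ge> 1" unfolding mn_def using assms p3 by simp
  have ln1: "ln \<ge> 1" unfolding ln_def using assms p3 by simp
  have m: "m = int mn" and l: "l = int ln" using assms unfolding mn_def ln_def by simp_all
  have e1: "ibinom m (nat l) = int (mn choose ln)" unfolding m l by (simp add: ibinom_nat)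
  have "mn * t + ln \<ge> 1" using ln1 by simp
  then have "m * int t + l - 1 = int (mn * t + ln - 1)" unfolding m l by simp
  moreover have "nat (m - 1) = mn - 1" unfolding m using mn1 by simp
  ultimately have e2: "ibinom (m * int t + l - 1) (nat (m - 1)) = int ((mn * t + ln - 1) choose (mn - 1))"
    by (simp add: ibinom_nat)
  show ?thesis
  proof (cases "\<beta> = 0")
    case True
    have "p ^ (2 * \<alpha>) dvd (mn choose ln) * ((mn * t + ln - 1) choose (mn - 1))"
    proof (rule op.beta0_case)
      show "p ^ \<alpha> dvd mn" unfolding mn_def by simp
      show "\<not> p dvd ln" unfolding ln_def using True assms by simp
    qed (use mn1 ln1 assms in auto)
    then have "int p ^ (2 * \<alpha>) dvd int ((mn choose ln) * ((mn * t + ln - 1) choose (mn - 1)))"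
      by (rule op.nat2int)
    then show ?thesis using True e1 e2 by simp
  next
    case False
    define M where "M = p ^ (\<alpha> - 1) * a"
    define L where "L = p ^ (\<beta> - 1) * b"
    define N where "N = M * t + L"
    have "p ^ \<alpha> = p * p ^ (\<alpha> - 1)" using assms(7) by (cases \<alpha>) simp_all
    then have mnM: "mn = p * M" unfolding mn_def M_def by simp
    have "p ^ \<beta> = p * p ^ (\<beta> - 1)" using False by (cases \<beta>) simp_all
    then have lnL: "ln = p * L" unfolding ln_def L_def by simp
    have M1: "M \<ge> 1" unfolding M_def using assms p3 by simp
    have L1: "L \<ge> 1" unfolding L_def using assms p3 by simp
    have N1: "N \<ge> 1" unfolding N_def using L1 by simp
    have d1: "m div int p = int M" unfolding m mnM using p3 by simp
    have d2: "l div int p = int L" unfolding l lnL using p3 by simp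
    have d3: "(m * int t + l) div int p = int N"
    proof -
      have "m * int t + l = int p * int N" unfolding m l mnM lnL N_def by (simp add: algebra_simps)
      then show ?thesis using p3 by simp
    qed
    have f1: "ibinom (m div int p) (nat (l div int p)) = int (M choose L)"
      unfolding d1 d2 by (simp add: ibinom_nat)
    have f2: "ibinom ((m * int t + l) div int p - 1) (nat (m div int p - 1)) = int ((N - 1) choose (M - 1))"
    proof -
      have x1: "int N - 1 = int (N - 1)" using N1 by simp
      have x2: "nat (int M - 1) = M - 1" using M1 by simp
      show ?thesis unfolding d3 d1 x1 x2 by (rule ibinom_nat)
    qed
    have g: "mn * t + ln - 1 = p * N - 1" unfolding mnM lnL N_def by (simp add: algebra_simps)
    have bp: "int p ^ (2 * (\<alpha> - 1 + 1)) dvd int ((p*M choose p*L) * ((p*(M * t + L) - 1) choose (p*M - 1)))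
           - int ((M choose L) * (((M * t + L) - 1) choose (M - 1)))"
      by (rule op.beta_pos_case[of M "\<alpha> - 1" a L "\<beta> - 1" b t]) (use assms M_def L_def in auto)
    have ee: "2 * (\<alpha> - 1 + 1) = 2 * \<alpha>" using assms(7) by simp
    have "int p ^ (2 * \<alpha>) dvd int ((p*M choose p*L) * ((p*N - 1) choose (p*M - 1)))
           - int ((M choose L) * ((N - 1) choose (M - 1)))"
      using bp unfolding N_def[symmetric] ee .
    then have "int p ^ (2 * \<alpha>) dvd int ((mn choose ln) * ((mn * t + ln - 1) choose (mn - 1)))
           - int ((M choose L) * ((N - 1) choose (M - 1)))"
      unfolding g unfolding mnM lnL .
    then show ?thesis using False e1 e2 f1 f2 by simp
  qed
qed

theorem lemma3p2:
  fixes p a b \<alpha> \<beta> :: nat and \<tau> m l :: int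
  assumes "prime p" and "odd p"
    and "a > 0" and "b > 0" and "\<not> p dvd a" and "\<not> p dvd b"
    and "\<alpha> \<ge> 1"
    and "m = int (p ^ \<alpha> * a)" and "l = int (p ^ \<beta> * b)"
  shows "(int p) ^ (2 * \<alpha>) dvd
           ibinom m (nat l) * ibinom (m * \<tau> + l - 1) (nat (m - 1))
           - (if \<beta> = 0 then 0
              else ibinom (m div int p) (nat (l div int p))
                   * ibinom ((m * \<tau> + l) div int p - 1) (nat (m div int p - 1)))"
proof -
  interpret op: oddprime p using assms(1,2) by unfold_locales
  have p3: "p \<ge> 3" by (rule op.p_ge3)
  define Q where "Q = int p ^ (2 * \<alpha>)"
  define mn where "mn = p ^ \<alpha> * a"
  define M where "M = p ^ (\<alpha> - 1) * a"
  have "p ^ \<alpha> = p * p ^ (\<alpha> - 1)" using assms(7) by (cases \<alpha>) simp_all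
  then have mnM: "mn = p * M" unfolding mn_def M_def by simp
  have "m = int mn" using assms(8) mn_def by simp
  also have "\<dots> = int p * int M" unfolding mnM by simp
  finally have m: "m = int p * int M" .
  have mdiv: "m div int p = int M" unfolding m using p3 by simp
  define E where "E x = ibinom m (nat l) * ibinom (m * x + l - 1) (nat (m - 1))
           - (if \<beta> = 0 then 0
              else ibinom (m div int p) (nat (l div int p))
                   * ibinom ((m * x + l) div int p - 1) (nat (m div int p - 1)))" for x
  define T where "T = fact mn * Q * (\<bar>\<tau>\<bar> + 1)"
  have Qpos: "Q \<ge> 1" unfolding Q_def using p3 by simp
  have Fpos: "(fact mn :: int) \<ge> 1" by simp
  have "(1::int) * 1 \<le> fact mn * Q" by (rule mult_mono) (use Qpos Fpos in auto)
  then have "fact mn * Q \<ge> (1::int)" by simp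
  then have "T \<ge> \<bar>\<tau>\<bar> + 1" unfolding T_def
    using mult_right_mono[of 1 "fact mn * Q" "\<bar>\<tau>\<bar> + 1"] by simp
  then have pos: "\<tau> + T \<ge> 1" by simp
  have FQ: "fact k * Q dvd T" if "k \<le> mn" for k
  proof -
    have "(fact k :: int) dvd fact mn" using that by (rule fact_dvd)
    then have "fact k * Q dvd fact mn * Q" by (rule mult_dvd_mono) simp
    then show ?thesis unfolding T_def by (rule dvd_mult2)
  qed
  have diff1: "Q dvd ibinom (m * (\<tau> + T) + l - 1) (nat (m - 1)) - ibinom (m * \<tau> + l - 1) (nat (m - 1))"
  proof -
    have eq: "m * (\<tau> + T) + l - 1 = (m * \<tau> + l - 1) + m * T" by (simp add: algebra_simps)
    have "m = int mn" using assms(8) mn_def by simp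
    then have "nat (m - 1) \<le> mn" by simp
    then have "fact (nat (m - 1)) * Q dvd T" by (rule FQ)
    then have "fact (nat (m - 1)) * Q dvd m * T" by (rule dvd_mult)
    then show ?thesis unfolding eq by (rule period)
  qed
  have diff2: "Q dvd ibinom ((m * (\<tau> + T) + l) div int p - 1) (nat (m div int p - 1))
                  - ibinom ((m * \<tau> + l) div int p - 1) (nat (m div int p - 1))"
  proof -
    have "m * (\<tau> + T) + l = (m * \<tau> + l) + (int M * T) * int p" unfolding m by (simp add: algebra_simps)
    then have "(m * (\<tau> + T) + l) div int p = ((m * \<tau> + l) + (int M * T) * int p) div int p" by (simp only:)
    also have "\<dots> = int M * T + (m * \<tau> + l) div int p" using p3 by (intro div_mult_self1) simp
    finally have "(m * (\<tau> + T) + l) div int p = (m * \<tau> + l) div int p + int M * T" by simp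
    then have eq: "(m * (\<tau> + T) + l) div int p - 1 = ((m * \<tau> + l) div int p - 1) + int M * T" by simp
    have x1: "nat (int M - 1) \<le> M" by simp
    have x2: "M \<le> p * M" using p3 by simp
    have "nat (m div int p - 1) \<le> mn" unfolding mdiv mnM using x1 x2 by (rule le_trans)
    then have "fact (nat (m div int p - 1)) * Q dvd T" by (rule FQ)
    then have "fact (nat (m div int p - 1)) * Q dvd int M * T" by (rule dvd_mult)
    then show ?thesis unfolding eq by (rule period)
  qed
  have ED: "Q dvd E (\<tau> + T) - E \<tau>"
  proof (cases "\<beta> = 0")
    case True
    have "E (\<tau> + T) - E \<tau> = ibinom m (nat l) * (ibinom (m * (\<tau> + T) + l - 1) (nat (m - 1)) - ibinom (m * \<tau> + l - 1) (nat (m - 1)))"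
      unfolding E_def using True by (simp add: algebra_simps)
    then show ?thesis using diff1 by (simp add: dvd_mult)
  next
    case False
    have "E (\<tau> + T) - E \<tau> = ibinom m (nat l) * (ibinom (m * (\<tau> + T) + l - 1) (nat (m - 1)) - ibinom (m * \<tau> + l - 1) (nat (m - 1)))
      - ibinom (m div int p) (nat (l div int p)) * (ibinom ((m * (\<tau> + T) + l) div int p - 1) (nat (m div int p - 1))
                  - ibinom ((m * \<tau> + l) div int p - 1) (nat (m div int p - 1)))"
      unfolding E_def using False by (simp add: algebra_simps)
    then show ?thesis using diff1 diff2 by (simp add: dvd_mult dvd_diff)
  qed
  define t where "t = nat (\<tau> + T)"
  have tt: "\<tau> + T = int t" "t \<ge> 1" unfolding t_def using pos by simp_all
  have "Q dvd E (int t)" unfolding E_def Q_def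
    by (rule nat_case) (use assms tt in auto)
  then have "Q dvd E (\<tau> + T)" using tt by simp
  then have "Q dvd E (\<tau> + T) - (E (\<tau> + T) - E \<tau>)" using ED by (rule dvd_diff)
  then show ?thesis unfolding Q_def E_def by simp
qed



end
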